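(* Assume the Setting and consider Algorithm 1 with noisy data $y^\delta$ satisfying $\|y^\delta-y\|\le\delta$, $\delta>0$, where $\tau>1$ and $\mu_0>0$ satisfy $1-\frac{1+\eta}{\tau}-\eta-\frac{\mu_0}{4\sigma}>0$. Then the algorithm terminates after finitely many steps, i.e. there is a finite integer $n_\delta$ with $\|F(x_{n_\delta}^\delta)-y^\delta\|\le\tau\delta<\|F(x_n^\delta)-y^\delta\|$ for all $0\le n<n_\delta$.
   Context: Setting. Let $X,Y$ be real Hilbert spaces. Let $\mathcal R:X\to(-\infty,\infty]$ be proper, lower semicontinuous and strongly convex with constant $\sigma>0$, i.e. $\mathcal R(t\bar x+(1-t)x)+\sigma t(1-t)\|\bar x-x\|^2\le t\mathcal R(\bar x)+(1-t)\mathcal R(x)$ for all $\bar x,x\in\mathrm{dom}(\mathcal R)$ and $t\in[0,1]$. For $\xi\in\partial\mathcal R(x)$ (subdifferential) the Bregman distance is $D_{\mathcal R}^{\xi}(z,x)=\mathcal R(z)-\mathcal R(x)-\langle\xi,z-x\rangle$. The convex conjugate $\mathcal R^*$ is differentiable with $\|\nabla\mathcal R^*(\bar\xi)-\nabla\mathcal R^*(\xi)\|\le\|\bar\xi-\xi\|/(2\sigma)$, and $\nabla\mathcal R^*(\xi)=\arg\min_{x\in X}\{\mathcal R(x)-\langle\xi,x\rangle\}$ (unique minimizer), with $\xi\in\partial\mathcal R(\nabla\mathcal R^*(\xi))$. Let $F:\mathrm{dom}(F)\subset X\to Y$ and $y\in Y$. Assume: (b) there are $\rho>0$, $x_0\in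 X$, $\xi_0\in\partial\mathcal R(x_0)$ with $B_{2\rho}(x_0):=\{x:\|x-x_0\|\le 2\rho\}\subset\mathrm{dom}(F)$, and $F(x)=y$ has a solution $\bar x$ with $D_{\mathcal R}^{\xi_0}(\bar x,x_0)\le\sigma\rho^2$; (c) $F$ is weakly closed: if $x_n\in\mathrm{dom}(F)$, $x_n\rightharpoonup x$ and $F(x_n)\to v$, then $x\in\mathrm{dom}(F)$ and $F(x)=v$; (d) there are bounded linear operators $L(x):X\to Y$, $x\in B_{2\rho}(x_0)$, with $x\mapsto L(x)$ continuous on $B_{2\rho}(x_0)$, a constant $\eta\in[0,1)$ with $\|F(x)-F(\bar x)-L(\bar x)(x-\bar x)\|\le\eta\|F(x)-F(\bar x)\|$ for all $x,\bar x\in B_{2\rho}(x_0)$, and a constant $L>0$ with $\|L(x)\|\le L$ on $B_{2\rho}(x_0)$. Algorithm 1 (noisy data $y^\delta$ with $\|y^\delta-y\|\le\delta$, $\delta>0$). Parameters: $\tau>1$, $\beta\in(0,\infty]$, $\mu_0>0$, $\mu_1>0$, and a fixed choice of one of two step-size rules: (constant) $\alpha_n^\delta=\mu_0/L^2$, or (adaptive) $\alpha_n^\delta=\min\{\mu_0\|r_n^\delta\|^2/\|g_n^\delta\|^2,\mu_1\}$ (with $\mu_0\|r_n^\delta\|^2/\|g_n^\delta\|^2:=+\infty$ if $g_n^\delta=0$). Set $\xi_{-1}^\delta=\xi_0^\delta=\xi_0$, $x_0^\delta=x_0=\nabla\mathcal R^*(\xi_0)$. For $n\ge0$: (i) $r_n^\delta:=F(x_n^\delta)-y^\delta$;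 if $\|r_n^\delta\|\le\tau\delta$, stop and output $x_n^\delta$ (the stopping index is denoted $n_\delta$). (ii) $g_n^\delta:=L(x_n^\delta)^*r_n^\delta$ and $\alpha_n^\delta$ by the chosen rule. (iii) $m_n^\delta:=\xi_n^\delta-\xi_{n-1}^\delta$; $\tilde\gamma_0^\delta:=0$ and for $n\ge1$, $\tilde\gamma_n^\delta:=\langle m_n^\delta,x_n^\delta-x_{n-1}^\delta\rangle-(1-\eta)\alpha_{n-1}^\delta\|r_{n-1}^\delta\|^2+(1+\eta)\alpha_{n-1}^\delta\delta\|r_{n-1}^\delta\|+\beta_{n-1}^\delta\tilde\gamma_{n-1}^\delta$. (iv) $\beta_n^\delta:=\min\{\max\{0,(\alpha_n^\delta\langle g_n^\delta,m_n^\delta\rangle-2\sigma\tilde\gamma_n^\delta)/\|m_n^\delta\|^2\},\beta\}$ if $m_n^\delta\ne0$, and $\beta_n^\delta:=0$ if $m_n^\delta=0$. (v) $\xi_{n+1}^\delta:=\xi_n^\delta-\alpha_n^\delta g_n^\delta+\beta_n^\delta m_n^\delta$, $x_{n+1}^\delta:=\nabla\mathcal R^*(\xi_{n+1}^\delta)$. *)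

theory Defs
  imports "HOL-Analysis.Analysis"
begin

definition proper_fun :: "('x \<Rightarrow> ereal) \<Rightarrow> bool" where
  "proper_fun R \<longleftrightarrow> (\<forall>x. R x \<noteq> -\<infinity>) \<and> (\<exists>x. R x \<noteq> \<infinity>)"

definition lsc_fun :: "('x::topological_space \<Rightarrow> ereal) \<Rightarrow> bool" where
  "lsc_fun R \<longleftrightarrow> (\<forall>a::ereal. closed {x. R x \<le> a})"

definition effdom :: "('x \<Rightarrow> ereal) \<Rightarrow> 'x set" where
  "effdom R = {x. R x < \<infinity>}"

definition strongly_convex :: "('x::real_normed_vector \<Rightarrow> ereal) \<Rightarrow> real \<Rightarrow> bool" where
  "strongly_convex R \<sigma> \<longleftrightarrow>
     (\<forall>xb\<in>effdom R. \<forall>x\<in>effdom R. \<forall>t\<in>{0..1::real}.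
        R (t *\<^sub>R xb + (1 - t) *\<^sub>R x) + ereal (\<sigma> * t * (1 - t) * (norm (xb - x))\<^sup>2)
          \<le> ereal t * R xb + ereal (1 - t) * R x)"

definition subdiff :: "('x::real_inner \<Rightarrow> ereal) \<Rightarrow> 'x \<Rightarrow> 'x set" where
  "subdiff R x = {\<xi>. R x \<noteq> \<infinity> \<and> R x \<noteq> -\<infinity> \<and>
                      (\<forall>z. R x + ereal (inner \<xi> (z - x)) \<le> R z)}"

definition bregman :: "('x::real_inner \<Rightarrow> ereal) \<Rightarrow> 'x \<Rightarrow> 'x \<Rightarrow> 'x \<Rightarrow> ereal" where
  "bregman R \<xi> z x = R z - R x - ereal (inner \<xi> (z - x))"

text \<open>Gradient of the convex conjugate: the unique minimiser of R(x) - <xi,x>.\<close>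
definition gradconj :: "('x::real_inner \<Rightarrow> ereal) \<Rightarrow> 'x \<Rightarrow> 'x" where
  "gradconj R \<xi> = (THE x. \<forall>z. R x - ereal (inner \<xi> x) \<le> R z - ereal (inner \<xi> z))"

definition adj :: "('x::real_inner \<Rightarrow>\<^sub>L 'y::real_inner) \<Rightarrow> 'y \<Rightarrow> 'x" where
  "adj A r = (THE g. \<forall>v. inner g v = inner r (blinfun_apply A v))"

definition weak_conv :: "(nat \<Rightarrow> 'x::real_inner) \<Rightarrow> 'x \<Rightarrow> bool" where
  "weak_conv xs x \<longleftrightarrow> (\<forall>v. (\<lambda>n. inner (xs n) v) \<longlonglongrightarrow> inner x v)"

text \<open>Algorithm 1 without the stopping test. The state at index n is
  (xi_n, xi_{n-1}, gamma~_n). The stopping index is the first n with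
  norm (F x_n - y^delta) <= tau delta; iterates after it are irrelevant.\<close>

definition step_size ::
  "bool \<Rightarrow> real \<Rightarrow> real \<Rightarrow> real \<Rightarrow> 'y::real_normed_vector \<Rightarrow> 'x::real_normed_vector \<Rightarrow> real" where
  "step_size adaptive \<mu>0 \<mu>1 Lc r g =
     (if adaptive then (if g = 0 then \<mu>1 else min (\<mu>0 * (norm r)\<^sup>2 / (norm g)\<^sup>2) \<mu>1)
      else \<mu>0 / Lc\<^sup>2)"

fun alg1 ::
  "('x::real_inner \<Rightarrow> ereal) \<Rightarrow> ('x \<Rightarrow> 'y::real_inner) \<Rightarrow> ('x \<Rightarrow> ('x \<Rightarrow>\<^sub>L 'y)) \<Rightarrow>
   'y \<Rightarrow> real \<Rightarrow> real \<Rightarrow> real \<Rightarrow> real \<Rightarrow> bool \<Rightarrow> real \<Rightarrow> real \<Rightarrow> ereal \<Rightarrow> 'x \<Rightarrow>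
   nat \<Rightarrow> 'x \<times> 'x \<times> real" where
  "alg1 R F Lop yd \<delta> \<sigma> \<eta> Lc adaptive \<mu>0 \<mu>1 \<beta> \<xi>0 0 = (\<xi>0, \<xi>0, 0)"
| "alg1 R F Lop yd \<delta> \<sigma> \<eta> Lc adaptive \<mu>0 \<mu>1 \<beta> \<xi>0 (Suc n) =
    (let (\<xi>, \<xi>p, \<gamma>) = alg1 R F Lop yd \<delta> \<sigma> \<eta> Lc adaptive \<mu>0 \<mu>1 \<beta> \<xi>0 n;
         x = gradconj R \<xi>;
         r = F x - yd;
         g = adj (Lop x) r;
         \<alpha> = step_size adaptive \<mu>0 \<mu>1 Lc r g;
         m = \<xi> - \<xi>p;
         b = (if m = 0 then 0 else
                real_of_ereal (min (ereal (max 0 ((\<alpha> * inner g m - 2 * \<sigma> * \<gamma>) / (norm m)\<^sup>2))) \<beta>));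
         \<xi>n = \<xi> - \<alpha> *\<^sub>R g + b *\<^sub>R m;
         xn = gradconj R \<xi>n;
         mn = \<xi>n - \<xi>;
         \<gamma>n = inner mn (xn - x) - (1 - \<eta>) * \<alpha> * (norm r)\<^sup>2
              + (1 + \<eta>) * \<alpha> * \<delta> * norm r + b * \<gamma>
     in (\<xi>n, \<xi>, \<gamma>n))"

definition alg1_x where
  "alg1_x R F Lop yd \<delta> \<sigma> \<eta> Lc adaptive \<mu>0 \<mu>1 \<beta> \<xi>0 n =
     gradconj R (fst (alg1 R F Lop yd \<delta> \<sigma> \<eta> Lc adaptive \<mu>0 \<mu>1 \<beta> \<xi>0 n))"

end

theory Submission
  imports Defs
begin

lemma strong_min_exists:
  fixes f :: "'a::{real_inner,complete_space} \<Rightarrow> real"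
  assumes ne: "S \<noteq> {}" and cpos: "c > 0" and bdd: "\<And>z. z \<in> S \<Longrightarrow> B \<le> f z"
    and mid: "\<And>a b. a \<in> S \<Longrightarrow> b \<in> S \<Longrightarrow> (1/2) *\<^sub>R (a + b) \<in> S \<and>
                 f ((1/2) *\<^sub>R (a + b)) + c * (norm (a - b))\<^sup>2 \<le> (f a + f b) / 2"
    and clos: "\<And>z x m. (\<forall>k. z k \<in> S) \<Longrightarrow> z \<longlonglongrightarrow> x \<Longrightarrow> (\<forall>k. f (z k) \<le> m + 1 / real (Suc k))
                 \<Longrightarrow> x \<in> S \<and> f x \<le> m"
  shows "\<exists>x\<in>S. \<forall>z\<in>S. f x \<le> f z"
proof -
  define m where "m = Inf (f ` S)"
  have bb: "bdd_below (f ` S)" by (meson bdd bdd_belowI2)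
  have mle: "m \<le> f z" if "z \<in> S" for z
    unfolding m_def using bb that by (simp add: cInf_lower)
  have "\<exists>z\<in>S. f z < m + 1 / real (Suc k)" for k
  proof -
    have "Inf (f ` S) < m + 1 / real (Suc k)" unfolding m_def by simp
    then show ?thesis using ne by (subst (asm) cInf_less_iff) (auto simp: bb)
  qed
  then obtain z where zS: "\<And>k. z k \<in> S" and zf: "\<And>k. f (z k) < m + 1 / real (Suc k)"
    by metis
  have key: "c * (norm (z k - z l))\<^sup>2 \<le> 1 / real (Suc N)" if "k \<ge> N" "l \<ge> N" for k l N
  proof -
    have h: "f ((1/2) *\<^sub>R (z k + z l)) + c * (norm (z k - z l))\<^sup>2 \<le> (f (z k) + f (z l)) / 2"
      and h2: "(1/2) *\<^sub>R (z k + z l) \<in> S" using mid[OF zS zS] by auto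
    have "m \<le> f ((1/2) *\<^sub>R (z k + z l))" using mle[OF h2] .
    moreover have "1 / real (Suc k) \<le> 1 / real (Suc N)" "1 / real (Suc l) \<le> 1 / real (Suc N)"
      using that by (auto simp: divide_simps)
    moreover have "2 * f ((1/2) *\<^sub>R (z k + z l)) + 2 * (c * (norm (z k - z l))\<^sup>2) \<le> f (z k) + f (z l)"
      using h unfolding add_divide_distrib by linarith
    moreover have "2 * (1 / real (Suc N)) \<ge> 1 / real (Suc k) + 1 / real (Suc l)"
      using calculation(2,3) by linarith
    ultimately show ?thesis using zf[of k] zf[of l] by linarith
  qed
  have "Cauchy z"
  proof (rule CauchyI)
    fix e :: real assume e: "0 < e"
    then have "c * e\<^sup>2 > 0" using cpos by simp
    then obtain N where N: "inverse (real (Suc N)) < c * e\<^sup>2" using reals_Archimedean by blast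
    show "\<exists>M. \<forall>k\<ge>M. \<forall>l\<ge>M. norm (z k - z l) < e"
    proof (intro exI allI impI)
      fix k l assume "N \<le> k" "N \<le> l"
      then have "c * (norm (z k - z l))\<^sup>2 < c * e\<^sup>2" using key[of N k l] N by (simp add: inverse_eq_divide)
      then have "(norm (z k - z l))\<^sup>2 < e\<^sup>2" using cpos by simp
      then show "norm (z k - z l) < e" using e by (meson power_less_imp_less_base less_imp_le)
    qed
  qed
  then obtain x where x: "z \<longlonglongrightarrow> x" using Cauchy_convergent_iff convergent_def by blast
  have "x \<in> S \<and> f x \<le> m" using clos[of z x m] zS x zf by (auto intro: less_imp_le)
  then show ?thesis using mle by (meson order_trans)
qed

lemma dom_real:
  assumes "proper_fun R" "z \<in> effdom R"
  shows "R z = ereal (real_of_ereal (R z))"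
  using assms unfolding proper_fun_def effdom_def by (cases "R z") auto


lemma dom_obtain:
  assumes "proper_fun R" "z \<in> effdom R"
  obtains v where "R z = ereal v"
  using assms unfolding proper_fun_def effdom_def by (cases "R z") auto

lemma quad:
  fixes a t \<sigma> :: real
  assumes "\<sigma> > 0"
  shows "a * t - \<sigma> * t\<^sup>2 \<le> a\<^sup>2 / (4 * \<sigma>)"
proof -
  have "a\<^sup>2 / (4 * \<sigma>) - (a * t - \<sigma> * t\<^sup>2) = (2 * \<sigma> * t - a)\<^sup>2 / (4 * \<sigma>)"
    using assms by (simp add: field_simps power2_eq_square)
  moreover have "(2 * \<sigma> * t - a)\<^sup>2 / (4 * \<sigma>) \<ge> 0" using assms by simp
  ultimately show ?thesis by linarith
qed

lemma sc_real:
  fixes R :: "'a::real_inner \<Rightarrow> ereal"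
  assumes pr: "proper_fun R" and sc: "strongly_convex R \<sigma>"
    and a: "a \<in> effdom R" and b: "b \<in> effdom R" and t: "0 \<le> t" "t \<le> 1"
  shows "t *\<^sub>R a + (1 - t) *\<^sub>R b \<in> effdom R \<and>
    real_of_ereal (R (t *\<^sub>R a + (1 - t) *\<^sub>R b)) + \<sigma> * t * (1 - t) * (norm (a - b))\<^sup>2
      \<le> t * real_of_ereal (R a) + (1 - t) * real_of_ereal (R b)"
proof -
  let ?p = "t *\<^sub>R a + (1 - t) *\<^sub>R b"
  have h: "R ?p + ereal (\<sigma> * t * (1 - t) * (norm (a - b))\<^sup>2) \<le> ereal t * R a + ereal (1 - t) * R b"
    using sc a b t unfolding strongly_convex_def by auto
  have ra: "R a = ereal (real_of_ereal (R a))" and rb: "R b = ereal (real_of_ereal (R b))"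
    by (rule dom_real[OF pr a], rule dom_real[OF pr b])
  have h2: "R ?p + ereal (\<sigma> * t * (1 - t) * (norm (a - b))\<^sup>2)
      \<le> ereal (t * real_of_ereal (R a) + (1 - t) * real_of_ereal (R b))"
    using h by (subst (asm) ra, subst (asm) rb) simp
  have "R ?p \<noteq> -\<infinity>" using pr unfolding proper_fun_def by auto
  moreover have "R ?p \<noteq> \<infinity>" using h2 by auto
  ultimately obtain v where v: "R ?p = ereal v" by (cases "R ?p") auto
  show ?thesis using h2 unfolding effdom_def by (simp add: v)
qed

lemma sub_strong:
  fixes R :: "'a::real_inner \<Rightarrow> ereal"
  assumes pr: "proper_fun R" and sc: "strongly_convex R \<sigma>" and sp: "\<sigma> > 0"
    and x: "x \<in> effdom R"
    and mn: "\<And>z. z \<in> effdom R \<Longrightarrow> real_of_ereal (R x) + inner \<xi> (z - x) \<le> real_of_ereal (R z)"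
    and z: "z \<in> effdom R"
  shows "real_of_ereal (R x) + inner \<xi> (z - x) + \<sigma> * (norm (z - x))\<^sup>2 \<le> real_of_ereal (R z)"
proof -
  define D where "D = real_of_ereal (R z) - real_of_ereal (R x) - inner \<xi> (z - x)"
  define N where "N = (norm (z - x))\<^sup>2"
  have N0: "N \<ge> 0" unfolding N_def by simp
  have gen: "\<sigma> * t * (1 - t) * N \<le> t * D" if t: "0 \<le> t" "t \<le> 1" for t
  proof -
    have s: "t *\<^sub>R z + (1 - t) *\<^sub>R x \<in> effdom R \<and>
      real_of_ereal (R (t *\<^sub>R z + (1 - t) *\<^sub>R x)) + \<sigma> * t * (1 - t) * (norm (z - x))\<^sup>2
      \<le> t * real_of_ereal (R z) + (1 - t) * real_of_ereal (R x)"
      using sc_real[OF pr sc z x t] .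
    have e: "t *\<^sub>R z + (1 - t) *\<^sub>R x - x = t *\<^sub>R (z - x)" by (simp add: algebra_simps)
    have "real_of_ereal (R x) + inner \<xi> (t *\<^sub>R z + (1 - t) *\<^sub>R x - x) \<le> real_of_ereal (R (t *\<^sub>R z + (1 - t) *\<^sub>R x))"
      using mn s by blast
    then have "real_of_ereal (R x) + t * inner \<xi> (z - x) \<le> real_of_ereal (R (t *\<^sub>R z + (1 - t) *\<^sub>R x))"
      by (simp add: e)
    moreover have "t * D = t * real_of_ereal (R z) + (1 - t) * real_of_ereal (R x) - real_of_ereal (R x) - t * inner \<xi> (z - x)"
      unfolding D_def by (simp add: algebra_simps)
    ultimately show ?thesis using s unfolding N_def by linarith
  qed
  have D0: "D \<ge> 0" using gen[of 1] by simp
  have "D \<ge> \<sigma> * N"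
  proof (rule ccontr)
    assume a: "\<not> D \<ge> \<sigma> * N"
    have Np: "N > 0"
    proof (rule ccontr)
      assume "\<not> N > 0"
      then have "N = 0" using N0 by simp
      then show False using a D0 by simp
    qed
    define t where "t = (\<sigma> * N - D) / (2 * \<sigma> * N)"
    have spN: "\<sigma> * N > 0" using sp Np by simp
    have t0: "t > 0"
    proof -
      have "\<sigma> * N - D > 0" using a by simp
      moreover have "2 * \<sigma> * N > 0" using sp Np by simp
      ultimately show ?thesis unfolding t_def by (rule divide_pos_pos)
    qed
    have t1: "t \<le> 1/2"
    proof -
      have "(\<sigma> * N - D) / (2 * \<sigma> * N) \<le> (\<sigma> * N) / (2 * \<sigma> * N)"
        using D0 spN sp N0 by (intro divide_right_mono) auto
      also have "(\<sigma> * N) / (2 * \<sigma> * N) = 1/2" using sp Np by simp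
      finally show ?thesis unfolding t_def .
    qed
    have "\<sigma> * t * (1 - t) * N \<le> t * D" using gen[of t] t0 t1 by simp
    moreover have "\<sigma> * t * (1 - t) * N = t * (\<sigma> * (1 - t) * N)" by (simp add: algebra_simps)
    ultimately have "t * (\<sigma> * (1 - t) * N) \<le> t * D" by simp
    then have "\<sigma> * (1 - t) * N \<le> D" using t0 by (simp add: mult_le_cancel_left_pos)
    moreover have "\<sigma> * (1 - t) * N = (\<sigma> * N + D) / 2" unfolding t_def using sp Np
      by (simp add: field_simps)
    ultimately show False using a by simp
  qed
  then show ?thesis unfolding D_def N_def by simp
qed

definition isminR :: "('a::real_inner \<Rightarrow> ereal) \<Rightarrow> 'a \<Rightarrow> 'a \<Rightarrow> bool" where
  "isminR R \<xi> x \<longleftrightarrow> x \<in> effdom R \<and> (\<forall>z\<in>effdom R. real_of_ereal (R x) + inner \<xi> (z - x) \<le> real_of_ereal (R z))"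

lemma isminR_strong:
  fixes R :: "'a::real_inner \<Rightarrow> ereal"
  assumes pr: "proper_fun R" and sc: "strongly_convex R \<sigma>" and sp: "\<sigma> > 0"
    and m: "isminR R \<xi> x" and z: "z \<in> effdom R"
  shows "real_of_ereal (R x) + inner \<xi> (z - x) + \<sigma> * (norm (z - x))\<^sup>2 \<le> real_of_ereal (R z)"
  using sub_strong[OF pr sc sp, of x \<xi> z] m z unfolding isminR_def by blast

lemma isminR_unique:
  fixes R :: "'a::real_inner \<Rightarrow> ereal"
  assumes pr: "proper_fun R" and sc: "strongly_convex R \<sigma>" and sp: "\<sigma> > 0"
    and m1: "isminR R \<xi> x" and m2: "isminR R \<xi> x'"
  shows "x = x'"
proof -
  have d1: "x \<in> effdom R" "x' \<in> effdom R" using m1 m2 unfolding isminR_def by auto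
  have a: "real_of_ereal (R x) + inner \<xi> (x' - x) + \<sigma> * (norm (x' - x))\<^sup>2 \<le> real_of_ereal (R x')"
    using isminR_strong[OF pr sc sp m1 d1(2)] .
  have b: "real_of_ereal (R x') + inner \<xi> (x - x') + \<sigma> * (norm (x - x'))\<^sup>2 \<le> real_of_ereal (R x)"
    using isminR_strong[OF pr sc sp m2 d1(1)] .
  have "inner \<xi> (x - x') = - inner \<xi> (x' - x)" by (simp add: inner_diff_right)
  moreover have "norm (x - x') = norm (x' - x)" by (simp add: norm_minus_commute)
  ultimately have "2 * \<sigma> * (norm (x' - x))\<^sup>2 \<le> 0" using a b by simp
  then have "(norm (x' - x))\<^sup>2 \<le> 0" using sp by (simp add: mult_le_0_iff)
  then show ?thesis by simp
qed

lemma isminR_exists: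
  fixes R :: "'a::{real_inner,complete_space} \<Rightarrow> ereal"
  assumes pr: "proper_fun R" and lsc: "lsc_fun R" and sc: "strongly_convex R \<sigma>" and sp: "\<sigma> > 0"
    and m0: "isminR R \<xi>0 x0"
  shows "\<exists>x. isminR R \<xi> x"
proof -
  let ?f = "\<lambda>z. real_of_ereal (R z) - inner \<xi> z"
  let ?S = "effdom R"
  have x0: "x0 \<in> ?S" using m0 unfolding isminR_def by auto
  define B where "B = real_of_ereal (R x0) - inner \<xi> x0 - (norm (\<xi>0 - \<xi>))\<^sup>2 / (4 * \<sigma>)"
  have bdd: "B \<le> ?f z" if z: "z \<in> ?S" for z
  proof -
    have h: "real_of_ereal (R x0) + inner \<xi>0 (z - x0) + \<sigma> * (norm (z - x0))\<^sup>2 \<le> real_of_ereal (R z)"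
      using isminR_strong[OF pr sc sp m0 z] .
    have e: "inner \<xi>0 (z - x0) - inner \<xi> z = inner (\<xi>0 - \<xi>) (z - x0) - inner \<xi> x0"
      by (simp add: inner_diff_left inner_diff_right)
    have cs: "inner (\<xi>0 - \<xi>) (z - x0) \<ge> - (norm (\<xi>0 - \<xi>) * norm (z - x0))"
      using Cauchy_Schwarz_ineq2[of "\<xi>0 - \<xi>" "z - x0"] unfolding abs_le_iff by linarith
    have q: "- (norm (\<xi>0 - \<xi>) * norm (z - x0)) + \<sigma> * (norm (z - x0))\<^sup>2 \<ge> - (norm (\<xi>0 - \<xi>))\<^sup>2 / (4 * \<sigma>)"
      using quad[OF sp, of "norm (\<xi>0 - \<xi>)" "norm (z - x0)"] by linarith
    show ?thesis unfolding B_def using h e cs q by linarith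
  qed
  have mid: "(1/2) *\<^sub>R (a + b) \<in> ?S \<and> ?f ((1/2) *\<^sub>R (a + b)) + (\<sigma>/4) * (norm (a - b))\<^sup>2 \<le> (?f a + ?f b) / 2"
    if a: "a \<in> ?S" and b: "b \<in> ?S" for a b
  proof -
    have s: "(1/2) *\<^sub>R a + (1 - 1/2) *\<^sub>R b \<in> ?S \<and>
      real_of_ereal (R ((1/2) *\<^sub>R a + (1 - 1/2) *\<^sub>R b)) + \<sigma> * (1/2) * (1 - 1/2) * (norm (a - b))\<^sup>2
      \<le> (1/2) * real_of_ereal (R a) + (1 - 1/2) * real_of_ereal (R b)"
      using sc_real[OF pr sc a b, of "1/2"] by simp
    have e: "(1/2) *\<^sub>R a + (1 - 1/2) *\<^sub>R b = (1/2) *\<^sub>R (a + b)" by (simp add: algebra_simps)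
    have i: "inner \<xi> ((1/2) *\<^sub>R (a + b)) = (inner \<xi> a + inner \<xi> b) / 2" by (simp add: inner_add_right)
    have m1: "(1/2) *\<^sub>R (a + b) \<in> ?S" using s unfolding e by simp
    have s': "real_of_ereal (R ((1/2) *\<^sub>R (a + b))) + \<sigma> * (norm (a - b))\<^sup>2 / 4
        \<le> real_of_ereal (R a) / 2 + real_of_ereal (R b) / 2" using s unfolding e by simp
    have c: "\<sigma> / 4 * (norm (a - b))\<^sup>2 = \<sigma> * (norm (a - b))\<^sup>2 / 4" by simp
    have m2: "?f ((1/2) *\<^sub>R (a + b)) + (\<sigma>/4) * (norm (a - b))\<^sup>2 \<le> (?f a + ?f b) / 2"
      using s' c i unfolding add_divide_distrib diff_divide_distrib by linarith
    show ?thesis using m1 m2 by blast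
  qed
  have clos: "x \<in> ?S \<and> ?f x \<le> m"
    if zS: "\<forall>k. z k \<in> ?S" and zx: "z \<longlonglongrightarrow> x" and zf: "\<forall>k. ?f (z k) \<le> m + 1 / real (Suc k)" for z x m
  proof -
    have le: "R x \<le> ereal (m + e + inner \<xi> x)" if e: "e > 0" for e
    proof -
      have "(\<lambda>k. inner \<xi> (z k)) \<longlonglongrightarrow> inner \<xi> x" using zx by (intro tendsto_intros)
      then have "eventually (\<lambda>k. dist (inner \<xi> (z k)) (inner \<xi> x) < e/2) sequentially"
        using e by (intro tendstoD) auto
      then have ev1: "eventually (\<lambda>k. inner \<xi> (z k) < inner \<xi> x + e/2) sequentially"
      proof (rule eventually_mono)
        fix k assume h: "dist (inner \<xi> (z k)) (inner \<xi> x) < e/2"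
        show "inner \<xi> (z k) < inner \<xi> x + e/2" using h unfolding dist_real_def abs_less_iff by linarith
      qed
      obtain N where N: "inverse (real (Suc N)) < e/2" using reals_Archimedean e by (metis half_gt_zero)
      have ev2: "eventually (\<lambda>k. 1 / real (Suc k) < e/2) sequentially"
      proof (rule eventually_sequentiallyI[of N])
        fix k assume "N \<le> k"
        then have "1 / real (Suc k) \<le> 1 / real (Suc N)" by (simp add: divide_simps)
        then show "1 / real (Suc k) < e/2" using N by (simp add: inverse_eq_divide)
      qed
      have ev: "eventually (\<lambda>k. R (z k) \<le> ereal (m + e + inner \<xi> x)) sequentially"
        using ev1 ev2
      proof eventually_elim
        case (elim k)
        have a1: "real_of_ereal (R (z k)) - inner \<xi> (z k) \<le> m + 1 / real (Suc k)" using zf by blast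
        have "real_of_ereal (R (z k)) \<le> m + e + inner \<xi> x" using a1 elim by linarith
        moreover obtain v where "R (z k) = ereal v" using dom_obtain[OF pr zS[rule_format, of k]] by blast
        ultimately show ?case by simp
      qed
      then obtain K where K: "\<And>k. k \<ge> K \<Longrightarrow> R (z k) \<le> ereal (m + e + inner \<xi> x)"
        unfolding eventually_sequentially by blast
      have cl: "closed {y. R y \<le> ereal (m + e + inner \<xi> x)}" using lsc unfolding lsc_fun_def by blast
      have lim: "(\<lambda>k. z (k + K)) \<longlonglongrightarrow> x" using zx by (rule LIMSEQ_ignore_initial_segment)
      have mem: "z (k + K) \<in> {y. R y \<le> ereal (m + e + inner \<xi> x)}" for k
        using K[of "k + K"] by simp
      have "x \<in> {y. R y \<le> ereal (m + e + inner \<xi> x)}"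
        by (rule closed_sequentially[OF cl, of "\<lambda>k. z (k + K)", OF mem lim])
      then show ?thesis by simp
    qed
    have xS: "x \<in> ?S" using le[of 1] unfolding effdom_def by auto
    have "?f x \<le> m + e" if "e > 0" for e
    proof -
      obtain v where v: "R x = ereal v" using dom_obtain[OF pr xS] by blast
      have "ereal v \<le> ereal (m + e + inner \<xi> x)" using le[OF that] v by simp
      then show ?thesis using v by simp
    qed
    then have "?f x \<le> m" by (meson field_le_epsilon)
    then show ?thesis using xS by simp
  qed
  have ne: "?S \<noteq> {}" using x0 by auto
  have "\<exists>x\<in>?S. \<forall>z\<in>?S. ?f x \<le> ?f z"
    apply (rule strong_min_exists[where S="?S" and c="\<sigma>/4" and B=B and f="?f"])
    subgoal by (rule ne)
    subgoal using sp by simp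
    subgoal for z by (rule bdd)
    subgoal for a b by (rule mid)
    subgoal for z x m using clos by blast
    done
  then obtain x where xS: "x \<in> ?S" and xm: "\<forall>z\<in>?S. ?f x \<le> ?f z" by blast
  have "isminR R \<xi> x" unfolding isminR_def using xS xm by (auto simp: inner_diff_right)
  then show ?thesis by blast
qed

lemma gradconj_isminR:
  fixes R :: "'a::real_inner \<Rightarrow> ereal"
  assumes pr: "proper_fun R" and sc: "strongly_convex R \<sigma>" and sp: "\<sigma> > 0"
    and m: "isminR R \<xi> x"
  shows "gradconj R \<xi> = x"
proof -
  have xS: "x \<in> effdom R" using m unfolding isminR_def by auto
  have P: "R x - ereal (inner \<xi> x) \<le> R z - ereal (inner \<xi> z)" for z
  proof (cases "z \<in> effdom R")
    case True
    have "real_of_ereal (R x) + inner \<xi> (z - x) \<le> real_of_ereal (R z)" using m True unfolding isminR_def by blast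
    then have "real_of_ereal (R x) - inner \<xi> x \<le> real_of_ereal (R z) - inner \<xi> z" by (simp add: inner_diff_right)
    moreover obtain u where u: "R x = ereal u" using dom_obtain[OF pr xS] by blast
    moreover obtain w where w: "R z = ereal w" using dom_obtain[OF pr True] by blast
    ultimately show ?thesis by simp
  next
    case False
    then have "R z = \<infinity>" unfolding effdom_def by auto
    moreover obtain u where u: "R x = ereal u" using dom_obtain[OF pr xS] by blast
    ultimately show ?thesis by simp
  qed
  have U: "x' = x" if Px': "\<forall>z. R x' - ereal (inner \<xi> x') \<le> R z - ereal (inner \<xi> z)" for x'
  proof -
    have "R x' - ereal (inner \<xi> x') \<le> R x - ereal (inner \<xi> x)" using Px' by blast
    moreover obtain u where u: "R x = ereal u" using dom_obtain[OF pr xS] by blast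
    ultimately have x'S: "x' \<in> effdom R" unfolding effdom_def
      by (cases "R x'") auto
    have "isminR R \<xi> x'" unfolding isminR_def
    proof (intro conjI ballI x'S)
      fix z assume zS: "z \<in> effdom R"
      have "R x' - ereal (inner \<xi> x') \<le> R z - ereal (inner \<xi> z)" using Px' by blast
      moreover obtain u where u: "R x' = ereal u" using dom_obtain[OF pr x'S] by blast
      moreover obtain w where w: "R z = ereal w" using dom_obtain[OF pr zS] by blast
      ultimately have "real_of_ereal (R x') - inner \<xi> x' \<le> real_of_ereal (R z) - inner \<xi> z" by simp
      then show "real_of_ereal (R x') + inner \<xi> (z - x') \<le> real_of_ereal (R z)" by (simp add: inner_diff_right)
    qed
    then show ?thesis using isminR_unique[OF pr sc sp _ m] by blast
  qed
  show ?thesis unfolding gradconj_def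
    by (rule the_equality) (use P U in auto)
qed

lemma adj_prop:
  fixes A :: "'a::{real_inner,complete_space} \<Rightarrow>\<^sub>L 'b::real_inner"
  shows "\<And>v. inner (adj A r) v = inner r (blinfun_apply A v)"
proof -
  let ?f = "\<lambda>v. (norm v)\<^sup>2 / 2 - inner r (blinfun_apply A v)"
  define B where "B = - (norm r * norm A)\<^sup>2 / 2"
  have bdd: "B \<le> ?f z" for z
  proof -
    have "inner r (blinfun_apply A z) \<le> norm r * norm (blinfun_apply A z)" by (rule Cauchy_Schwarz_ineq2[THEN abs_le_D1])
    also have "\<dots> \<le> norm r * (norm A * norm z)" by (simp add: mult_left_mono norm_blinfun)
    finally have a: "inner r (blinfun_apply A z) \<le> norm r * norm A * norm z" by simp
    have "0 \<le> (norm z - norm r * norm A)\<^sup>2" by simp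
    then have "0 \<le> (norm z)\<^sup>2 - 2 * (norm r * norm A * norm z) + (norm r * norm A)\<^sup>2"
      by (simp add: power2_eq_square algebra_simps)
    then show ?thesis unfolding B_def using a by simp
  qed
  have mid: "(1/2) *\<^sub>R (a + b) \<in> UNIV \<and> ?f ((1/2) *\<^sub>R (a + b)) + (1/8) * (norm (a - b))\<^sup>2 \<le> (?f a + ?f b) / 2"
    for a b :: 'a
  proof -
    have par: "(norm ((1/2) *\<^sub>R (a + b)))\<^sup>2 + (1/4) * (norm (a - b))\<^sup>2 = ((norm a)\<^sup>2 + (norm b)\<^sup>2) / 2"
      by (simp add: power2_norm_eq_inner inner_add_left inner_add_right inner_diff_left inner_diff_right
          inner_commute algebra_simps)
    have l: "inner r (blinfun_apply A ((1/2) *\<^sub>R (a + b))) = (inner r (blinfun_apply A a) + inner r (blinfun_apply A b)) / 2"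
      by (simp add: blinfun.add_right blinfun.scaleR_right inner_add_right)
    show ?thesis using par l unfolding add_divide_distrib diff_divide_distrib by simp
  qed
  have clos: "x \<in> UNIV \<and> ?f x \<le> m"
    if "\<forall>k. z k \<in> UNIV" and zx: "z \<longlonglongrightarrow> x" and zf: "\<forall>k. ?f (z k) \<le> m + 1 / real (Suc k)" for z x m
  proof -
    have "(\<lambda>k. ?f (z k)) \<longlonglongrightarrow> ?f x" using zx by (intro tendsto_intros) auto
    moreover have "(\<lambda>k. m + 1 / real (Suc k)) \<longlonglongrightarrow> m + 0"
      by (intro tendsto_intros LIMSEQ_Suc[OF lim_inverse_n'[unfolded inverse_eq_divide]])
    ultimately show ?thesis using zf by (auto intro: LIMSEQ_le)
  qed
  have "\<exists>x\<in>UNIV. \<forall>z\<in>UNIV. ?f x \<le> ?f z"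
    apply (rule strong_min_exists[where S=UNIV and c="1/8" and B=B and f="?f"])
    subgoal by simp
    subgoal by simp
    subgoal for z by (rule bdd)
    subgoal for a b by (rule mid)
    subgoal for z x m using clos by blast
    done
  then obtain g where gm: "\<forall>z\<in>UNIV. ?f g \<le> ?f z" by blast
  have gp: "inner g v = inner r (blinfun_apply A v)" for v
  proof -
    define k where "k = inner g v - inner r (blinfun_apply A v)"
    define s where "s = 1 / ((norm v)\<^sup>2 + 1)"
    define t where "t = - s * k"
    have pv: "(norm v)\<^sup>2 + 1 > 0" using zero_le_power2[of "norm v"] by linarith
    have sp: "s > 0" unfolding s_def using pv by simp
    have sv: "s * (norm v)\<^sup>2 < 1" unfolding s_def using pv by (simp add: divide_simps)
    have fm: "?f g \<le> ?f (g + t *\<^sub>R v)" using gm by blast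
    have P1: "(norm (g + t *\<^sub>R v))\<^sup>2 = (norm g)\<^sup>2 + 2 * (t * inner g v) + t\<^sup>2 * (norm v)\<^sup>2"
      unfolding power2_norm_eq_inner by (simp add: inner_add_left inner_add_right inner_commute power2_eq_square algebra_simps)
    have P2: "inner r (blinfun_apply A (g + t *\<^sub>R v)) = inner r (blinfun_apply A g) + t * inner r (blinfun_apply A v)"
      by (simp add: blinfun.add_right blinfun.scaleR_right inner_add_right)
    have tk: "t * k = t * inner g v - t * inner r (blinfun_apply A v)" unfolding k_def by (simp add: algebra_simps)
    have "0 \<le> t * k + t\<^sup>2 * (norm v)\<^sup>2 / 2"
      using fm unfolding P1 P2 tk add_divide_distrib by simp
    moreover have "t * k + t\<^sup>2 * (norm v)\<^sup>2 / 2 = s * k\<^sup>2 * (s * (norm v)\<^sup>2 / 2 - 1)"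
      unfolding t_def by (simp add: power2_eq_square algebra_simps)
    ultimately have nn: "0 \<le> s * k\<^sup>2 * (s * (norm v)\<^sup>2 / 2 - 1)" by simp
    have "k = 0"
    proof (rule ccontr)
      assume "k \<noteq> 0"
      then have "s * k\<^sup>2 > 0" using sp by simp
      moreover have "s * (norm v)\<^sup>2 / 2 - 1 < 0" using sv by simp
      ultimately have "s * k\<^sup>2 * (s * (norm v)\<^sup>2 / 2 - 1) < 0" by (rule mult_pos_neg)
      then show False using nn by simp
    qed
    then show ?thesis unfolding k_def by simp
  qed
  have "adj A r = g" unfolding adj_def
  proof (rule the_equality)
    show "\<forall>v. inner g v = inner r (blinfun_apply A v)" using gp by blast
  next
    fix g' assume h: "\<forall>v. inner g' v = inner r (blinfun_apply A v)"
    have "inner (g' - g) (g' - g) = 0" using h gp by (simp add: inner_diff_left)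
    then show "g' = g" by simp
  qed
  then show "\<And>v. inner (adj A r) v = inner r (blinfun_apply A v)" using gp by simp
qed

lemma adj_norm:
  fixes A :: "'a::{real_inner,complete_space} \<Rightarrow>\<^sub>L 'b::real_inner"
  shows "norm (adj A r) \<le> norm A * norm r"
proof -
  let ?g = "adj A r"
  have "(norm ?g)\<^sup>2 = inner r (blinfun_apply A ?g)" using adj_prop[of A r ?g] by (simp add: power2_norm_eq_inner)
  also have "\<dots> \<le> norm r * (norm A * norm ?g)"
    by (meson Cauchy_Schwarz_ineq2 abs_le_D1 mult_left_mono norm_blinfun norm_ge_zero order_trans)
  finally have "norm ?g * norm ?g \<le> (norm A * norm r) * norm ?g" by (simp add: power2_eq_square algebra_simps)
  then show ?thesis by (cases "norm ?g = 0") auto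
qed

theorem mainTheorem3:
  fixes R :: "'x::{real_inner, complete_space} \<Rightarrow> ereal"
    and F :: "'x \<Rightarrow> 'y::{real_inner, complete_space}"
    and D :: "'x set"
    and Lop :: "'x \<Rightarrow> ('x \<Rightarrow>\<^sub>L 'y)"
    and y yd :: 'y
    and x0 \<xi>0 xbar :: 'x
    and \<sigma> \<rho> \<eta> Lc \<delta> \<tau> \<mu>0 \<mu>1 :: real
    and \<beta> :: ereal
    and adaptive :: bool
  assumes R_proper: "proper_fun R"
    and R_lsc: "lsc_fun R"
    and sigma_pos: "\<sigma> > 0"
    and R_sconv: "strongly_convex R \<sigma>"
    \<comment> \<open>(b)\<close>
    and rho_pos: "\<rho> > 0"
    and xi0: "\<xi>0 \<in> subdiff R x0"
    and ball_dom: "cball x0 (2 * \<rho>) \<subseteq> D"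
    and xbar_dom: "xbar \<in> D"
    and xbar_sol: "F xbar = y"
    and xbar_breg: "bregman R \<xi>0 xbar x0 \<le> ereal (\<sigma> * \<rho>\<^sup>2)"
    \<comment> \<open>(c)\<close>
    and F_wclosed: "\<And>xs x v. (\<forall>n. xs n \<in> D) \<Longrightarrow> weak_conv xs x \<Longrightarrow>
                       (\<lambda>n. F (xs n)) \<longlonglongrightarrow> v \<Longrightarrow> x \<in> D \<and> F x = v"
    \<comment> \<open>(d)\<close>
    and L_cont: "continuous_on (cball x0 (2 * \<rho>)) Lop"
    and eta_range: "0 \<le> \<eta>" "\<eta> < 1"
    and tangential: "\<And>x xb. x \<in> cball x0 (2 * \<rho>) \<Longrightarrow> xb \<in> cball x0 (2 * \<rho>) \<Longrightarrow>
        norm (F x - F xb - blinfun_apply (Lop xb) (x - xb)) \<le> \<eta> * norm (F x - F xb)"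
    and Lc_pos: "Lc > 0"
    and L_bound: "\<And>x. x \<in> cball x0 (2 * \<rho>) \<Longrightarrow> norm (Lop x) \<le> Lc"
    \<comment> \<open>noisy data and parameters\<close>
    and delta_pos: "\<delta> > 0"
    and noise: "norm (yd - y) \<le> \<delta>"
    and tau: "\<tau> > 1"
    and beta_pos: "\<beta> > 0"
    and mu0: "\<mu>0 > 0"
    and mu1: "\<mu>1 > 0"
    and param: "1 - (1 + \<eta>) / \<tau> - \<eta> - \<mu>0 / (4 * \<sigma>) > 0"
  shows "\<exists>n\<delta>::nat.
           norm (F (alg1_x R F Lop yd \<delta> \<sigma> \<eta> Lc adaptive \<mu>0 \<mu>1 \<beta> \<xi>0 n\<delta>) - yd) \<le> \<tau> * \<delta> \<and>
           (\<forall>n<n\<delta>. \<tau> * \<delta> < norm (F (alg1_x R F Lop yd \<delta> \<sigma> \<eta> Lc adaptive \<mu>0 \<mu>1 \<beta> \<xi>0 n) - yd))"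
proof -
  define A where "A = alg1 R F Lop yd \<delta> \<sigma> \<eta> Lc adaptive \<mu>0 \<mu>1 \<beta> \<xi>0"
  define xi where "xi n = fst (A n)" for n
  define xp where "xp n = fst (snd (A n))" for n
  define gam where "gam n = snd (snd (A n))" for n
  define x where "x n = gradconj R (xi n)" for n
  define r where "r n = F (x n) - yd" for n
  define g where "g n = adj (Lop (x n)) (r n)" for n
  define al where "al n = step_size adaptive \<mu>0 \<mu>1 Lc (r n) (g n)" for n
  define m where "m n = xi n - xp n" for n
  define bt where "bt n = (if m n = 0 then 0 else
     real_of_ereal (min (ereal (max 0 ((al n * inner (g n) (m n) - 2 * \<sigma> * gam n) / (norm (m n))\<^sup>2))) \<beta>))" for n
  define Rr where "Rr z = real_of_ereal (R z)" for z
  have AS: "A (Suc n) = (xi n - al n *\<^sub>R g n + bt n *\<^sub>R m n, xi n,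
      inner (xi n - al n *\<^sub>R g n + bt n *\<^sub>R m n - xi n) (gradconj R (xi n - al n *\<^sub>R g n + bt n *\<^sub>R m n) - x n)
       - (1 - \<eta>) * al n * (norm (r n))\<^sup>2 + (1 + \<eta>) * al n * \<delta> * norm (r n) + bt n * gam n)" for n
  proof -
    have e: "A n = (xi n, xp n, gam n)" unfolding xi_def xp_def gam_def by simp
    show ?thesis
      apply (subst A_def)
      apply (subst alg1.simps(2))
      apply (subst A_def[symmetric])
      apply (subst e)
      apply (simp only: Let_def prod.case al_def g_def r_def x_def m_def bt_def)
      done
  qed
  have xiS: "xi (Suc n) = xi n - al n *\<^sub>R g n + bt n *\<^sub>R m n" for n
    unfolding xi_def[of "Suc n"] AS by simp
  have xpS: "xp (Suc n) = xi n" for n unfolding xp_def[of "Suc n"] AS by simp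
  have mS: "m (Suc n) = xi (Suc n) - xi n" for n by (simp add: m_def xpS)
  have gamS: "gam (Suc n) = inner (xi (Suc n) - xi n) (x (Suc n) - x n)
       - (1 - \<eta>) * al n * (norm (r n))\<^sup>2 + (1 + \<eta>) * al n * \<delta> * norm (r n) + bt n * gam n" for n
    unfolding gam_def[of "Suc n"] AS x_def[of "Suc n"] xiS by simp
  have xi0': "xi 0 = \<xi>0" and m0: "m 0 = 0" and gam0: "gam 0 = 0"
    unfolding xi_def m_def xp_def gam_def A_def by simp_all
  have algx: "alg1_x R F Lop yd \<delta> \<sigma> \<eta> Lc adaptive \<mu>0 \<mu>1 \<beta> \<xi>0 n = x n" for n
    unfolding alg1_x_def x_def xi_def A_def by simp
  have Rfin: "R x0 \<noteq> \<infinity>" "R x0 \<noteq> -\<infinity>" using xi0 unfolding subdiff_def by auto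
  have x0S: "x0 \<in> effdom R" unfolding effdom_def using Rfin by (cases "R x0") auto
  obtain u0 where u0: "R x0 = ereal u0" using Rfin by (cases "R x0") auto
  have Rx0: "R x0 = ereal (Rr x0)" and Rru0: "Rr x0 = u0" unfolding Rr_def using u0 by auto
  have min0: "isminR R \<xi>0 x0" unfolding isminR_def
  proof (intro conjI ballI x0S)
    fix z assume zS: "z \<in> effdom R"
    have "R x0 + ereal (inner \<xi>0 (z - x0)) \<le> R z" using xi0 unfolding subdiff_def by blast
    moreover obtain w where w: "R z = ereal w" using dom_obtain[OF R_proper zS] by blast
    ultimately show "real_of_ereal (R x0) + inner \<xi>0 (z - x0) \<le> real_of_ereal (R z)"
      using u0 unfolding Rr_def by simp
  qed
  have hmin: "isminR R (xi n) (x n)" for n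
  proof -
    obtain z where z: "isminR R (xi n) z" using isminR_exists[OF R_proper R_lsc R_sconv sigma_pos min0] by blast
    show ?thesis using gradconj_isminR[OF R_proper R_sconv sigma_pos z] z unfolding x_def by simp
  qed
  have xS: "x n \<in> effdom R" for n using hmin[of n] unfolding isminR_def by auto
  have x00: "x 0 = x0" unfolding x_def xi0' using gradconj_isminR[OF R_proper R_sconv sigma_pos min0] .
  have xbS: "xbar \<in> effdom R"
  proof -
    have "R xbar - R x0 - ereal (inner \<xi>0 (xbar - x0)) \<le> ereal (\<sigma> * \<rho>\<^sup>2)"
      using xbar_breg unfolding bregman_def .
    then show ?thesis unfolding effdom_def using u0 by (cases "R xbar") auto
  qed
  define Dl where "Dl n = Rr xbar - Rr (x n) - inner (xi n) (xbar - x n)" for n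
  have Dl0: "Dl 0 \<le> \<sigma> * \<rho>\<^sup>2"
  proof -
    have "R xbar - R x0 - ereal (inner \<xi>0 (xbar - x0)) \<le> ereal (\<sigma> * \<rho>\<^sup>2)"
      using xbar_breg unfolding bregman_def .
    moreover obtain w where w: "R xbar = ereal w" using dom_obtain[OF R_proper xbS] by blast
    ultimately have "w - Rr x0 - inner \<xi>0 (xbar - x0) \<le> \<sigma> * \<rho>\<^sup>2"
      using u0 Rru0 by simp
    then show ?thesis unfolding Dl_def x00 xi0' Rr_def using w by simp
  qed
  have Dlow: "\<sigma> * (norm (xbar - x n))\<^sup>2 \<le> Dl n" for n
    using isminR_strong[OF R_proper R_sconv sigma_pos hmin[of n] xbS] unfolding Dl_def Rr_def by simp
  have ball_of: "z \<in> cball x0 (2 * \<rho>)" if "\<sigma> * (norm (xbar - z))\<^sup>2 \<le> \<sigma> * \<rho>\<^sup>2" for z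
  proof -
    have "(norm (xbar - z))\<^sup>2 \<le> \<rho>\<^sup>2" using that sigma_pos by simp
    then have a: "norm (xbar - z) \<le> \<rho>" using rho_pos by (meson less_imp_le power2_le_imp_le)
    have "\<sigma> * (norm (xbar - x0))\<^sup>2 \<le> \<sigma> * \<rho>\<^sup>2" using Dlow[of 0] Dl0 unfolding x00 by linarith
    then have "(norm (xbar - x0))\<^sup>2 \<le> \<rho>\<^sup>2" using sigma_pos by simp
    then have b: "norm (xbar - x0) \<le> \<rho>" using rho_pos by (meson less_imp_le power2_le_imp_le)
    have "dist x0 z \<le> norm (xbar - x0) + norm (xbar - z)"
      by (metis dist_norm dist_triangle2 dist_commute)
    then show ?thesis using a b by simp
  qed
  have xbB: "xbar \<in> cball x0 (2 * \<rho>)" using ball_of[of xbar] sigma_pos rho_pos by simp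
  show ?thesis
  proof (rule ccontr)
    assume nex: "\<not> ?thesis"
    have H: "\<tau> * \<delta> < norm (r n)" for n
    proof (rule ccontr)
      assume "\<not> \<tau> * \<delta> < norm (r n)"
      then have "norm (r n) \<le> \<tau> * \<delta>" by simp
      then have ex: "\<exists>n. norm (r n) \<le> \<tau> * \<delta>" by blast
      define k where "k = (LEAST n. norm (r n) \<le> \<tau> * \<delta>)"
      have "norm (r k) \<le> \<tau> * \<delta>" unfolding k_def using ex by (metis LeastI)
      moreover have "\<forall>n<k. \<tau> * \<delta> < norm (r n)" unfolding k_def using not_less_Least by fastforce
      ultimately show False using nex unfolding algx r_def by blast
    qed
    define c0 where "c0 = 1 - (1 + \<eta>) / \<tau> - \<eta> - \<mu>0 / (4 * \<sigma>)"
    define amin where "amin = min (\<mu>0 / Lc\<^sup>2) \<mu>1"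
    define eps where "eps = amin * c0 * (\<tau> * \<delta>)\<^sup>2"
    have c0p: "c0 > 0" using param unfolding c0_def .
    have aminp: "amin > 0" unfolding amin_def using mu0 mu1 Lc_pos by simp
    have epsp: "eps > 0" unfolding eps_def using c0p aminp tau delta_pos by simp
    have Q: "Dl n \<le> Dl 0 - real n * eps \<and> inner (m n) (x n - xbar) \<le> gam n" for n
    proof (induction n)
      case 0
      show ?case using m0 gam0 by simp
    next
      case (Suc n)
      have IH1: "Dl n \<le> Dl 0 - real n * eps" and IH2: "inner (m n) (x n - xbar) \<le> gam n" using Suc by auto
      have xnB: "x n \<in> cball x0 (2 * \<rho>)"
      proof (rule ball_of)
        have "real n * eps \<ge> 0" using epsp by simp
        then show "\<sigma> * (norm (xbar - x n))\<^sup>2 \<le> \<sigma> * \<rho>\<^sup>2" using Dlow[of n] IH1 Dl0 by linarith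
      qed
      define a where "a = al n"
      define gg where "gg = g n"
      define rr where "rr = r n"
      define mm where "mm = m n"
      define b where "b = bt n"
      define \<gamma> where "\<gamma> = gam n"
      define X where "X = norm rr"
      define d where "d = xi (Suc n) - xi n"
      have d_eq: "d = - a *\<^sub>R gg + b *\<^sub>R mm" unfolding d_def xiS a_def gg_def b_def mm_def by (simp add: algebra_simps)
      have Xp: "X > \<tau> * \<delta>" using H[of n] unfolding X_def rr_def .
      have "\<tau> * \<delta> > 0" using tau delta_pos by simp
      then have X0: "X > 0" using Xp by linarith
      have gnorm: "norm gg \<le> Lc * X"
      proof -
        have "norm gg \<le> norm (Lop (x n)) * norm rr" unfolding gg_def g_def rr_def by (rule adj_norm)
        also have "\<dots> \<le> Lc * X" unfolding X_def using L_bound[OF xnB] by (simp add: mult_right_mono)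
        finally show ?thesis .
      qed
      have gsq: "(norm gg)\<^sup>2 \<le> Lc\<^sup>2 * X\<^sup>2"
        using gnorm by (metis norm_ge_zero power_mono power_mult_distrib)
      have cst: "\<mu>0 / Lc\<^sup>2 * (norm gg)\<^sup>2 \<le> \<mu>0 * X\<^sup>2"
      proof -
        have "\<mu>0 / Lc\<^sup>2 * (norm gg)\<^sup>2 \<le> \<mu>0 / Lc\<^sup>2 * (Lc\<^sup>2 * X\<^sup>2)"
          using gsq mu0 by (intro mult_left_mono) auto
        also have "\<dots> = \<mu>0 * X\<^sup>2" using Lc_pos by simp
        finally show ?thesis .
      qed
      have a_low: "a \<ge> amin" and a_up: "a * (norm gg)\<^sup>2 \<le> \<mu>0 * X\<^sup>2"
      proof -
        have "a \<ge> amin \<and> a * (norm gg)\<^sup>2 \<le> \<mu>0 * X\<^sup>2"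
        proof (cases adaptive)
          case False
          then have ae: "a = \<mu>0 / Lc\<^sup>2" unfolding a_def al_def step_size_def by simp
          show ?thesis unfolding ae amin_def using cst by simp
        next
          case True
          show ?thesis
          proof (cases "gg = 0")
            case True
            then have "a = \<mu>1" using \<open>adaptive\<close> unfolding a_def al_def step_size_def gg_def by simp
            then show ?thesis unfolding amin_def using True mu0 by simp
          next
            case False
            then have ae: "a = min (\<mu>0 * X\<^sup>2 / (norm gg)\<^sup>2) \<mu>1"
              using \<open>adaptive\<close> unfolding a_def al_def step_size_def gg_def X_def rr_def by simp
            have gp: "(norm gg)\<^sup>2 > 0" using False by simp
            have "\<mu>0 / Lc\<^sup>2 \<le> \<mu>0 * X\<^sup>2 / (norm gg)\<^sup>2"
              using cst gp by (simp add: pos_le_divide_eq)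
            then have l: "a \<ge> amin" unfolding ae amin_def by simp
            have "a * (norm gg)\<^sup>2 \<le> \<mu>0 * X\<^sup>2 / (norm gg)\<^sup>2 * (norm gg)\<^sup>2"
              unfolding ae using gp by (intro mult_right_mono) auto
            then show ?thesis using l gp by simp
          qed
        qed
        then show "a \<ge> amin" "a * (norm gg)\<^sup>2 \<le> \<mu>0 * X\<^sup>2" by auto
      qed
      have a0: "a > 0" using a_low aminp by simp
      have b0: "b \<ge> 0" and bq: "b\<^sup>2 * (norm mm)\<^sup>2 - 2 * b * (a * inner gg mm - 2 * \<sigma> * \<gamma>) \<le> 0"
      proof -
        have "b \<ge> 0 \<and> b\<^sup>2 * (norm mm)\<^sup>2 - 2 * b * (a * inner gg mm - 2 * \<sigma> * \<gamma>) \<le> 0"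
        proof (cases "mm = 0")
          case True
          then show ?thesis unfolding b_def bt_def mm_def by simp
        next
          case False
          define c where "c = (a * inner gg mm - 2 * \<sigma> * \<gamma>) / (norm mm)\<^sup>2"
          have np: "(norm mm)\<^sup>2 > 0" using False by simp
          have bc: "b = real_of_ereal (min (ereal (max 0 c)) \<beta>)"
            using False unfolding b_def bt_def c_def a_def gg_def mm_def \<gamma>_def by simp
          have bb: "b \<ge> 0 \<and> (b = 0 \<or> b \<le> c)"
          proof (cases \<beta>)
            case (real bv)
            then have "bv > 0" using beta_pos by simp
            then show ?thesis unfolding bc real by (simp add: min_def max_def)
          next
            case PInf
            then show ?thesis unfolding bc by (simp add: min_def max_def)
          next
            case MInf
            then show ?thesis using beta_pos by simp
          qed
          have e: "a * inner gg mm - 2 * \<sigma> * \<gamma> = c * (norm mm)\<^sup>2" unfolding c_def using np by simp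
          have "b\<^sup>2 * (norm mm)\<^sup>2 - 2 * b * (c * (norm mm)\<^sup>2) = b * (b - 2 * c) * (norm mm)\<^sup>2"
            by (simp add: power2_eq_square algebra_simps)
          also have "\<dots> \<le> 0"
          proof -
            have "b * (b - 2 * c) \<le> 0" using bb by (auto simp: mult_le_0_iff)
            then show ?thesis using np by (simp add: mult_le_0_iff)
          qed
          finally show ?thesis using bb e by simp
        qed
        then show "b \<ge> 0" "b\<^sup>2 * (norm mm)\<^sup>2 - 2 * b * (a * inner gg mm - 2 * \<sigma> * \<gamma>) \<le> 0" by auto
      qed
      have tang: "inner gg (x n - xbar) \<ge> (1 - \<eta>) * X\<^sup>2 - (1 + \<eta>) * \<delta> * X"
      proof -
        define e where "e = F xbar - F (x n) - blinfun_apply (Lop (x n)) (xbar - x n)"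
        have en: "norm e \<le> \<eta> * norm (F xbar - F (x n))" unfolding e_def using tangential[OF xbB xnB] .
        have le: "blinfun_apply (Lop (x n)) (x n - xbar) = e + rr + (yd - y)"
          unfolding e_def rr_def r_def xbar_sol[symmetric]
          by (simp add: blinfun.diff_right algebra_simps)
        have "inner gg (x n - xbar) = inner rr (blinfun_apply (Lop (x n)) (x n - xbar))"
          unfolding gg_def g_def rr_def by (rule adj_prop)
        also have "\<dots> = inner rr e + X\<^sup>2 + inner rr (yd - y)"
          unfolding le X_def by (simp add: inner_add_right power2_norm_eq_inner)
        finally have i: "inner gg (x n - xbar) = inner rr e + X\<^sup>2 + inner rr (yd - y)" .
        have fn: "norm (F xbar - F (x n)) \<le> X + \<delta>"
        proof -
          have "F (x n) - F xbar = rr + (yd - y)" unfolding rr_def r_def xbar_sol by (simp add: algebra_simps)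
          then have "norm (F xbar - F (x n)) = norm (rr + (yd - y))" by (metis norm_minus_commute)
          also have "\<dots> \<le> X + norm (yd - y)" unfolding X_def by (rule norm_triangle_ineq)
          finally show ?thesis using noise by simp
        qed
        have "inner rr e \<ge> - (X * norm e)" unfolding X_def using Cauchy_Schwarz_ineq2[of rr e] unfolding abs_le_iff by linarith
        moreover have "X * norm e \<le> X * (\<eta> * (X + \<delta>))"
        proof -
          have "\<eta> * norm (F xbar - F (x n)) \<le> \<eta> * (X + \<delta>)" using fn eta_range by (intro mult_left_mono) auto
          then have "norm e \<le> \<eta> * (X + \<delta>)" using en by linarith
          then show ?thesis using X0 by (intro mult_left_mono) auto
        qed
        moreover have "inner rr (yd - y) \<ge> - (X * \<delta>)"
        proof -
          have "inner rr (yd - y) \<ge> - (X * norm (yd - y))" unfolding X_def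
            using Cauchy_Schwarz_ineq2[of rr "yd - y"] unfolding abs_le_iff by linarith
          moreover have "X * norm (yd - y) \<le> X * \<delta>" using noise X0 by (simp add: mult_left_mono)
          ultimately show ?thesis by simp
        qed
        moreover have "X * (\<eta> * (X + \<delta>)) = \<eta> * X\<^sup>2 + \<eta> * \<delta> * X"
          by (simp add: power2_eq_square algebra_simps)
        moreover have "(1 - \<eta>) * X\<^sup>2 - (1 + \<eta>) * \<delta> * X = X\<^sup>2 - (\<eta> * X\<^sup>2 + \<eta> * \<delta> * X) - X * \<delta>"
          by (simp add: power2_eq_square algebra_simps)
        ultimately show ?thesis unfolding i by linarith
      qed
      define Dn1 where "Dn1 = Rr (x n) - Rr (x (Suc n)) - inner (xi (Suc n)) (x n - x (Suc n))"
      have D5: "Dn1 \<le> (norm d)\<^sup>2 / (4 * \<sigma>)"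
      proof -
        have s: "Rr (x n) + inner (xi n) (x (Suc n) - x n) + \<sigma> * (norm (x (Suc n) - x n))\<^sup>2 \<le> Rr (x (Suc n))"
          using isminR_strong[OF R_proper R_sconv sigma_pos hmin[of n] xS[of "Suc n"]] unfolding Rr_def .
        have i1: "inner (xi (Suc n)) (x n - x (Suc n)) = - inner (xi (Suc n)) (x (Suc n) - x n)"
          by (simp add: inner_diff_right)
        have i2: "inner d (x (Suc n) - x n) = inner (xi (Suc n)) (x (Suc n) - x n) - inner (xi n) (x (Suc n) - x n)"
          unfolding d_def by (simp add: inner_diff_left)
        have e1: "Dn1 \<le> inner d (x (Suc n) - x n) - \<sigma> * (norm (x (Suc n) - x n))\<^sup>2"
          using s i1 i2 unfolding Dn1_def by linarith
        have cs: "inner d (x (Suc n) - x n) \<le> norm d * norm (x (Suc n) - x n)"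
          using Cauchy_Schwarz_ineq2 abs_le_D1 by blast
        have q: "norm d * t - \<sigma> * t\<^sup>2 \<le> (norm d)\<^sup>2 / (4 * \<sigma>)" for t
          using quad[OF sigma_pos] .
        show ?thesis using e1 cs q[of "norm (x (Suc n) - x n)"] by linarith
      qed
      have D6: "Dl (Suc n) - Dl n = Dn1 + inner d (x n - xbar)"
        unfolding Dl_def Dn1_def d_def by (simp add: inner_diff_left inner_diff_right algebra_simps)
      have D7: "inner d (x n - xbar) = - (a * inner gg (x n - xbar)) + b * inner mm (x n - xbar)"
        unfolding d_eq by (simp add: inner_add_left inner_diff_left)
      have D8: "(norm d)\<^sup>2 = a\<^sup>2 * (norm gg)\<^sup>2 - 2 * a * b * inner gg mm + b\<^sup>2 * (norm mm)\<^sup>2"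
        unfolding d_eq power2_norm_eq_inner by (simp add: inner_add_left inner_add_right inner_diff_left inner_diff_right inner_commute
            power2_eq_square algebra_simps)
      have bm: "b * inner mm (x n - xbar) \<le> b * \<gamma>"
        using IH2 b0 unfolding mm_def \<gamma>_def by (simp add: mult_left_mono)
      have comb: "(norm d)\<^sup>2 / (4 * \<sigma>) + b * \<gamma> \<le> a * (a * (norm gg)\<^sup>2) / (4 * \<sigma>)"
      proof -
        have E: "a\<^sup>2 * (norm gg)\<^sup>2 - 2 * a * b * inner gg mm + b\<^sup>2 * (norm mm)\<^sup>2 + 4 * \<sigma> * (b * \<gamma>)
            = a * (a * (norm gg)\<^sup>2) + (b\<^sup>2 * (norm mm)\<^sup>2 - 2 * b * (a * inner gg mm - 2 * \<sigma> * \<gamma>))"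
          by (simp add: power2_eq_square algebra_simps)
        have "(norm d)\<^sup>2 + 4 * \<sigma> * (b * \<gamma>) \<le> a * (a * (norm gg)\<^sup>2)"
          unfolding D8 E using bq by linarith
        then have "((norm d)\<^sup>2 + 4 * \<sigma> * (b * \<gamma>)) / (4 * \<sigma>) \<le> a * (a * (norm gg)\<^sup>2) / (4 * \<sigma>)"
          using sigma_pos by (intro divide_right_mono) auto
        moreover have "((norm d)\<^sup>2 + 4 * \<sigma> * (b * \<gamma>)) / (4 * \<sigma>) = (norm d)\<^sup>2 / (4 * \<sigma>) + b * \<gamma>"
          using sigma_pos by (simp add: field_simps)
        ultimately show ?thesis by simp
      qed
      have stepA: "inner d (x n - xbar) \<le> - (a * ((1 - \<eta>) * X\<^sup>2 - (1 + \<eta>) * \<delta> * X)) + b * \<gamma>"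
      proof -
        have "a * ((1 - \<eta>) * X\<^sup>2 - (1 + \<eta>) * \<delta> * X) \<le> a * inner gg (x n - xbar)"
          using tang a0 by (intro mult_left_mono) auto
        then show ?thesis using D7 bm by linarith
      qed
      have diff1: "Dl (Suc n) - Dl n \<le> a * (a * (norm gg)\<^sup>2) / (4 * \<sigma>) - (a * ((1 - \<eta>) * X\<^sup>2 - (1 + \<eta>) * \<delta> * X))"
        using D6 D5 stepA comb by linarith
      define K where "K = a * X\<^sup>2"
      define P where "P = \<mu>0 / (4 * \<sigma>)"
      define Qc where "Qc = (1 + \<eta>) / \<tau>"
      have t1: "a * (a * (norm gg)\<^sup>2) / (4 * \<sigma>) \<le> P * K"
      proof -
        have "a * (a * (norm gg)\<^sup>2) \<le> a * (\<mu>0 * X\<^sup>2)" using a_up a0 by (intro mult_left_mono) auto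
        then have "a * (a * (norm gg)\<^sup>2) / (4 * \<sigma>) \<le> a * (\<mu>0 * X\<^sup>2) / (4 * \<sigma>)"
          using sigma_pos by (intro divide_right_mono) auto
        moreover have "a * (\<mu>0 * X\<^sup>2) / (4 * \<sigma>) = P * K" unfolding P_def K_def by simp
        ultimately show ?thesis by simp
      qed
      have dX: "\<delta> * X \<le> X\<^sup>2 / \<tau>"
      proof -
        have "\<tau> * \<delta> * X \<le> X * X" using Xp X0 by (intro mult_right_mono) auto
        then have "\<delta> * X * \<tau> \<le> X\<^sup>2" by (simp add: power2_eq_square mult.commute mult.left_commute)
        then show ?thesis using tau by (simp add: pos_le_divide_eq)
      qed
      have t2: "a * ((1 + \<eta>) * \<delta> * X) \<le> Qc * K"
      proof -
        have "(1 + \<eta>) * (\<delta> * X) \<le> (1 + \<eta>) * (X\<^sup>2 / \<tau>)" using dX eta_range by (intro mult_left_mono) auto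
        then have "a * ((1 + \<eta>) * (\<delta> * X)) \<le> a * ((1 + \<eta>) * (X\<^sup>2 / \<tau>))" by (rule mult_left_mono) (use a0 in simp)
        moreover have "a * ((1 + \<eta>) * (X\<^sup>2 / \<tau>)) = Qc * K" unfolding Qc_def K_def by simp
        moreover have "a * ((1 + \<eta>) * \<delta> * X) = a * ((1 + \<eta>) * (\<delta> * X))" by (simp add: mult.assoc)
        ultimately show ?thesis by simp
      qed
      have diff2: "Dl (Suc n) - Dl n \<le> - (c0 * K)"
      proof -
        have e1: "a * ((1 - \<eta>) * X\<^sup>2 - (1 + \<eta>) * \<delta> * X) = K - \<eta> * K - a * ((1 + \<eta>) * \<delta> * X)"
          unfolding K_def by (simp add: algebra_simps)
        have e2: "c0 * K = K - Qc * K - \<eta> * K - P * K" unfolding c0_def P_def Qc_def by (simp add: algebra_simps)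
        show ?thesis using diff1 t1 t2 e1 e2 by linarith
      qed
      have Kb: "K \<ge> amin * (\<tau> * \<delta>)\<^sup>2"
      proof -
        have "(\<tau> * \<delta>)\<^sup>2 \<le> X\<^sup>2" using Xp tau delta_pos by (intro power_mono) auto
        then show ?thesis unfolding K_def using a_low aminp by (intro mult_mono) auto
      qed
      have "c0 * (amin * (\<tau> * \<delta>)\<^sup>2) \<le> c0 * K" using Kb c0p by (intro mult_left_mono) auto
      then have "c0 * K \<ge> eps" unfolding eps_def by (simp add: mult.assoc mult.left_commute)
      moreover have "real (Suc n) * eps = real n * eps + eps" by (simp add: algebra_simps)
      ultimately have first: "Dl (Suc n) \<le> Dl 0 - real (Suc n) * eps" using diff2 IH1 by linarith
      have second: "inner (m (Suc n)) (x (Suc n) - xbar) \<le> gam (Suc n)"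
      proof -
        have "inner (m (Suc n)) (x (Suc n) - xbar) = inner d (x (Suc n) - x n) + inner d (x n - xbar)"
          unfolding mS d_def[symmetric] by (simp add: inner_diff_right)
        also have "\<dots> \<le> inner d (x (Suc n) - x n) + (- (a * ((1 - \<eta>) * X\<^sup>2 - (1 + \<eta>) * \<delta> * X)) + b * \<gamma>)"
          using stepA by simp
        also have "\<dots> = gam (Suc n)" unfolding gamS d_def a_def X_def rr_def b_def \<gamma>_def
          by (simp add: algebra_simps)
        finally show ?thesis .
      qed
      show ?case using first second by simp
    qed
    obtain N where N: "Dl 0 / eps < real N" using reals_Archimedean2 by blast
    have "Dl 0 < real N * eps" using N epsp by (simp add: field_simps)
    moreover have "Dl N \<ge> 0"
    proof -
      have "0 \<le> \<sigma> * (norm (xbar - x N))\<^sup>2" using sigma_pos by simp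
      then show ?thesis using Dlow[of N] by linarith
    qed
    ultimately show False using Q[of N] by linarith
  qed
qed

end
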